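(* There exist absolute constants $c, C > 0$ and $m_0$ such that the following holds for every integer $m \geq m_0$. Let $s = \lceil \log_2 m \rceil + 2$, $k = m^2 s$ and $n = km$. Partition $[n]$ into blocks $B_1,\ldots,B_m$ with $|B_i| = k$, choose $T_i \subset B_i$ with $|T_i| = s$, put $T = \bigcup_i T_i$, and let $\mathcal{F} \subset \mathcal{P}([n])$ be the union-closed family generated by $\{B_i \cup \{t\} : i \in [m],\ t \in T\}$. Then both $\mathrm{AOD}(\mathcal{F})$ and the average abundance $\mathbb{E}_{x \in [n]}[\gamma_x] = \frac1n\sum_{x\in[n]}\gamma_x$ lie between $c\,\frac{\log_2\log_2|\mathcal{F}|}{\log_2|\mathcal{F}|}$ and $C\,\frac{\log_2\log_2|\mathcal{F}|}{\log_2|\mathcal{F}|}$.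
   Context: $[n] = \{1,\ldots,n\}$. A family of sets is union-closed if it contains the union of any two of its members; the union-closed family generated by $\mathcal{G}$ is the smallest union-closed family containing $\mathcal{G}$. For a finite nonempty family $\mathcal{F} \subset \mathcal{P}(X)$ and $x \in X$, the abundance is $\gamma_x = |\{A \in \mathcal{F} : x \in A\}|/|\mathcal{F}|$. For $\mathcal{F} \neq \emptyset,\{\emptyset\}$, the average overlap density is $\mathrm{AOD}(\mathcal{F}) = \frac{1}{|\mathcal{F}\setminus\{\emptyset\}|}\sum_{A \in \mathcal{F}\setminus\{\emptyset\}} \frac{1}{|A|}\sum_{x \in A}\gamma_x$. *)

theory Defs
  imports Complex_Main
begin

inductive_set uc_gen :: "'a set set \<Rightarrow> 'a set set" for G :: "'a set set" where
  base: "A \<in> G \<Longrightarrow> A \<in> uc_gen G"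
| union: "A \<in> uc_gen G \<Longrightarrow> B \<in> uc_gen G \<Longrightarrow> A \<union> B \<in> uc_gen G"

definition abundance :: "'a set set \<Rightarrow> 'a \<Rightarrow> real" where
  "abundance F x = real (card {A \<in> F. x \<in> A}) / real (card F)"

definition AOD :: "'a set set \<Rightarrow> real" where
  "AOD F = (1 / real (card (F - {{}}))) *
     (\<Sum>A \<in> F - {{}}. (1 / real (card A)) * (\<Sum>x\<in>A. abundance F x))"

end

theory Submission
  imports Defs
begin

locale cx =
  fixes m s k :: nat and B Tb :: "nat \<Rightarrow> nat set"
  assumes m16: "m \<ge> 16"
  and s_def: "s = nat \<lceil>log 2 (real m)\<rceil> + 2"
  and k_def: "k = m^2 * s"
  and cardB: "\<And>i. i \<in> {1..m} \<Longrightarrow> card (B i) = k"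
  and disj: "\<And>i j. i \<in> {1..m} \<Longrightarrow> j \<in> {1..m} \<Longrightarrow> i \<noteq> j \<Longrightarrow> B i \<inter> B j = {}"
  and cover: "(\<Union>i\<in>{1..m}. B i) = {1..k*m}"
  and Tsub: "\<And>i. i \<in> {1..m} \<Longrightarrow> Tb i \<subseteq> B i"
  and cardT: "\<And>i. i \<in> {1..m} \<Longrightarrow> card (Tb i) = s"
begin

definition "T = (\<Union>i\<in>{1..m}. Tb i)"
definition "G = {B i \<union> {t} | i t. i \<in> {1..m} \<and> t \<in> T}"
definition "F = uc_gen G"

lemma s_ge2: "s \<ge> 2" using s_def by simp
lemma k_ge: "k \<ge> 2*m*s" "k > s"
proof -
  have "m^2 \<ge> 2*m" using m16 by (simp add: power2_eq_square)
  then show "k \<ge> 2*m*s" unfolding k_def by (metis mult_le_mono1)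
  moreover have "2*m*s > s" using m16 s_ge2 by simp
  ultimately show "k > s" by linarith
qed

lemma finB: "i \<in> {1..m} \<Longrightarrow> finite (B i)"
  using cardB k_ge by (metis card.infinite not_less_zero)

lemma finTb: "i \<in> {1..m} \<Longrightarrow> finite (Tb i)"
  using finB Tsub finite_subset by blast

lemma Tb_ne: "i \<in> {1..m} \<Longrightarrow> Tb i \<noteq> {}"
  using cardT s_ge2 by force

lemma T_sub: "T \<subseteq> {1..k*m}"
  using Tsub cover unfolding T_def by blast

lemma finT: "finite T" using T_sub finite_subset by blast

lemma T_inter: "i \<in> {1..m} \<Longrightarrow> T \<inter> B i = Tb i"
  unfolding T_def using Tsub disj by blast

lemma card_T: "card T \<le> m*s"
proof -
  have "card T \<le> (\<Sum>i\<in>{1..m}. card (Tb i))" unfolding T_def by (rule card_UN_le) simp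
  also have "\<dots> = m*s" using cardT by simp
  finally show ?thesis .
qed

lemma F_struct: "A \<in> F \<Longrightarrow> A \<subseteq> {1..k*m} \<and> (\<exists>i\<in>{1..m}. B i \<subseteq> A) \<and>
   (\<forall>x\<in>A. x \<in> T \<or> (\<exists>j\<in>{1..m}. x \<in> B j \<and> B j \<subseteq> A))"
  unfolding F_def
proof (induction rule: uc_gen.induct)
  case (base A)
  then obtain i t where A: "A = B i \<union> {t}" "i \<in> {1..m}" "t \<in> T" unfolding G_def by blast
  then show ?case using T_sub cover by blast
next
  case (union A1 A2)
  then show ?case by blast
qed

lemma finF: "finite F"
proof -
  have "F \<subseteq> Pow {1..k*m}" using F_struct by blast
  then show ?thesis using finite_subset by blast
qed

lemma F_ne: "{} \<notin> F"
  using F_struct finB cardB k_ge by (metis card.empty not_less_zero subset_empty)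

lemma B_in_F: "i \<in> {1..m} \<Longrightarrow> B i \<in> F"
proof -
  assume i: "i \<in> {1..m}"
  then obtain t where t: "t \<in> Tb i" using Tb_ne by blast
  then have "t \<in> T" using i unfolding T_def by blast
  moreover have "B i \<union> {t} = B i" using t Tsub i by blast
  ultimately show ?thesis unfolding F_def G_def using i by (metis (mono_tags, lifting) mem_Collect_eq uc_gen.base)
qed

lemma BS_in_F: "i \<in> {1..m} \<Longrightarrow> S \<subseteq> T \<Longrightarrow> B i \<union> S \<in> F"
proof -
  assume i: "i \<in> {1..m}" and S: "S \<subseteq> T"
  have "finite S" using S finT finite_subset by blast
  then show ?thesis using S
  proof (induction S rule: finite_induct)
    case empty then show ?case using B_in_F i by simp
  next
    case (insert x S)
    have "B i \<union> {x} \<in> F" unfolding F_def G_def using i insert by (intro uc_gen.base) blast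
    moreover have "B i \<union> S \<in> F" using insert by blast
    ultimately have "(B i \<union> {x}) \<union> (B i \<union> S) \<in> F" unfolding F_def by (rule uc_gen.union)
    moreover have "(B i \<union> {x}) \<union> (B i \<union> S) = B i \<union> insert x S" by blast
    ultimately show ?case by simp
  qed
qed


definition "X i = {A \<in> F. B i \<subseteq> A}"
definition "W i = (\<lambda>S. B i \<union> S) ` Pow (T - Tb i)"

lemma Tb_disj: "i \<in> {1..m} \<Longrightarrow> j \<in> {1..m} \<Longrightarrow> i \<noteq> j \<Longrightarrow> Tb i \<inter> Tb j = {}"
  using disj Tsub by blast

lemma card_UTb: "J \<subseteq> {1..m} \<Longrightarrow> card (\<Union>j\<in>J. Tb j) = s * card J"
proof -
  assume J: "J \<subseteq> {1..m}"
  have fJ: "finite J" using J finite_subset by blast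
  have "card (\<Union>j\<in>J. Tb j) = (\<Sum>j\<in>J. card (Tb j))"
  proof (rule card_UN_disjoint[OF fJ])
    show "\<forall>i\<in>J. finite (Tb i)" using J finTb by blast
    show "\<forall>i\<in>J. \<forall>j\<in>J. i \<noteq> j \<longrightarrow> Tb i \<inter> Tb j = {}" using J Tb_disj by blast
  qed
  also have "\<dots> = (\<Sum>j\<in>J. s)" using J cardT by (intro sum.cong) auto
  finally show ?thesis by simp
qed

lemma T_minus: "i \<in> {1..m} \<Longrightarrow> T - Tb i = (\<Union>j\<in>{1..m}-{i}. Tb j)"
  unfolding T_def using Tb_disj by blast

lemma card_W: "i \<in> {1..m} \<Longrightarrow> card (W i) = 2^(s*(m-1))"
proof -
  assume i: "i \<in> {1..m}"
  have inj: "inj_on (\<lambda>S. B i \<union> S) (Pow (T - Tb i))"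
  proof (rule inj_onI)
    fix S1 S2 assume "S1 \<in> Pow (T - Tb i)" "S2 \<in> Pow (T - Tb i)" "B i \<union> S1 = B i \<union> S2"
    moreover have "T \<inter> B i = Tb i" using T_inter i by blast
    ultimately show "S1 = S2" by blast
  qed
  have "card (W i) = card (Pow (T - Tb i))" unfolding W_def using inj by (rule card_image)
  also have "\<dots> = 2^card (T - Tb i)" using finT by (simp add: card_Pow)
  also have "card (T - Tb i) = s*(m-1)" using i T_minus card_UTb[of "{1..m}-{i}"] by simp
  finally show ?thesis .
qed

lemma W_sub: "i \<in> {1..m} \<Longrightarrow> W i \<subseteq> X i"
  unfolding W_def X_def using BS_in_F by blast

lemma W_disj: "i \<in> {1..m} \<Longrightarrow> j \<in> {1..m} \<Longrightarrow> i \<noteq> j \<Longrightarrow> W i \<inter> W j = {}"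
proof (rule ccontr)
  assume i: "i \<in> {1..m}" and j: "j \<in> {1..m}" and ij: "i \<noteq> j" and "W i \<inter> W j \<noteq> {}"
  then obtain S1 S2 where S: "S1 \<subseteq> T" "S2 \<subseteq> T" "B i \<union> S1 = B j \<union> S2" unfolding W_def by blast
  then have "B j \<subseteq> S1" using disj[OF i j ij] by blast
  then have "B j \<subseteq> T \<inter> B j" using S by blast
  then have "B j \<subseteq> Tb j" using T_inter j by blast
  then have "card (B j) \<le> card (Tb j)" using finTb j card_mono by blast
  then show False using cardB cardT j k_ge by simp
qed

lemma N_lower: "m * 2^(s*(m-1)) \<le> card F"
proof -
  have "card (\<Union>i\<in>{1..m}. W i) = (\<Sum>i\<in>{1..m}. card (W i))"
    using W_disj by (intro card_UN_disjoint) (auto simp: W_def finT)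
  also have "\<dots> = (\<Sum>i\<in>{1..m}. 2^(s*(m-1)))" using card_W by (intro sum.cong) auto
  finally have "card (\<Union>i\<in>{1..m}. W i) = m * 2^(s*(m-1))" by simp
  moreover have "(\<Union>i\<in>{1..m}. W i) \<subseteq> F" using W_sub unfolding X_def by blast
  ultimately show ?thesis using finF card_mono by metis
qed

lemma X_lower: "i \<in> {1..m} \<Longrightarrow> 2^(s*(m-1)) \<le> card (X i)"
proof -
  assume i: "i \<in> {1..m}"
  have "finite (X i)" unfolding X_def using finF by simp
  then have "card (W i) \<le> card (X i)" using W_sub[OF i] by (rule card_mono)
  then show ?thesis using card_W[OF i] by simp
qed

lemma X_upper: "i \<in> {1..m} \<Longrightarrow> card (X i) \<le> (2^s+1)^(m-1)"
proof -
  assume i: "i \<in> {1..m}"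
  define M where "M = {1..m} - {i}"
  have fM: "finite M" unfolding M_def by simp
  have cM: "card M = m - 1" unfolding M_def using i by simp
  define Y where "Y R = (\<lambda>S. B i \<union> \<Union>(B ` R) \<union> S) ` Pow (\<Union>j\<in>M-R. Tb j)" for R
  have sub: "X i \<subseteq> (\<Union>R\<in>Pow M. Y R)"
  proof
    fix A assume A: "A \<in> X i"
    then have AF: "A \<in> F" and BA: "B i \<subseteq> A" unfolding X_def by auto
    define R where "R = {j\<in>M. B j \<subseteq> A}"
    define S where "S = A \<inter> (\<Union>j\<in>M-R. Tb j)"
    have eq: "A = B i \<union> \<Union>(B ` R) \<union> S"
    proof
      have "\<Union>(B ` R) \<subseteq> A" unfolding R_def by auto
      moreover have "S \<subseteq> A" unfolding S_def by auto
      ultimately show "B i \<union> \<Union>(B ` R) \<union> S \<subseteq> A" using BA by simp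
    next
      show "A \<subseteq> B i \<union> \<Union>(B ` R) \<union> S"
      proof
        fix x assume x: "x \<in> A"
        from F_struct[OF AF] x have "x \<in> T \<or> (\<exists>j\<in>{1..m}. x \<in> B j \<and> B j \<subseteq> A)" by simp
        then show "x \<in> B i \<union> \<Union>(B ` R) \<union> S"
        proof
          assume "x \<in> T"
          then obtain j where j: "j \<in> {1..m}" "x \<in> Tb j" unfolding T_def by auto
          then have xB: "x \<in> B j" using Tsub by auto
          show ?thesis
          proof (cases "j = i")
            case True then show ?thesis using xB by simp
          next
            case False
            then have jM: "j \<in> M" using j unfolding M_def by simp
            show ?thesis
            proof (cases "j \<in> R")
              case True then show ?thesis using xB by auto
            next
              case False
              then have "x \<in> (\<Union>j\<in>M-R. Tb j)" using jM j by auto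
              then have "x \<in> S" using x unfolding S_def by simp
              then show ?thesis by simp
            qed
          qed
        next
          assume "\<exists>j\<in>{1..m}. x \<in> B j \<and> B j \<subseteq> A"
          then obtain j where j: "j \<in> {1..m}" "x \<in> B j" "B j \<subseteq> A" by auto
          show ?thesis
          proof (cases "j = i")
            case True then show ?thesis using j by simp
          next
            case False
            then have "j \<in> R" using j unfolding M_def R_def by simp
            then show ?thesis using j by auto
          qed
        qed
      qed
    qed
    have Sp: "S \<in> Pow (\<Union>j\<in>M-R. Tb j)" unfolding S_def by simp
    have Rp: "R \<in> Pow M" unfolding R_def by auto
    have "A \<in> Y R" unfolding Y_def
    proof (rule image_eqI[where x=S])
      show "A = (\<lambda>S. B i \<union> \<Union>(B ` R) \<union> S) S" using eq by simp
    qed (fact Sp)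
    then show "A \<in> (\<Union>R\<in>Pow M. Y R)" using Rp by (intro UN_I[where a=R])
  qed
  have finU: "finite (\<Union>j\<in>M-R. Tb j)" for R
  proof -
    have "M - R \<subseteq> {1..m}" unfolding M_def by blast
    then have "\<forall>j\<in>M-R. finite (Tb j)" using finTb by blast
    then show ?thesis using fM by blast
  qed
  have "card (X i) \<le> card (\<Union>R\<in>Pow M. Y R)"
  proof (rule card_mono[OF _ sub])
    have "finite (Y R)" for R unfolding Y_def using finU[of R] by (intro finite_imageI) simp
    then have "\<forall>R\<in>Pow M. finite (Y R)" by blast
    then show "finite (\<Union>R\<in>Pow M. Y R)" using fM by simp
  qed
  also have "\<dots> \<le> (\<Sum>R\<in>Pow M. card (Y R))" using fM by (intro card_UN_le) simp
  also have "\<dots> \<le> (\<Sum>R\<in>Pow M. 2^(s * card (M - R)))"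
  proof (rule sum_mono)
    fix R assume R: "R \<in> Pow M"
    have "card (Y R) \<le> card (Pow (\<Union>j\<in>M-R. Tb j))" unfolding Y_def
      using finU[of R] by (intro card_image_le) simp
    also have "\<dots> = 2^card (\<Union>j\<in>M-R. Tb j)"
      by (rule card_Pow[OF finU])
    also have "card (\<Union>j\<in>M-R. Tb j) = s * card (M - R)"
      by (rule card_UTb) (auto simp: M_def)
    finally show "card (Y R) \<le> 2^(s * card (M - R))" .
  qed
  also have "\<dots> = (\<Sum>R\<in>Pow M. (\<Prod>x\<in>R. 1) * (\<Prod>x\<in>M-R. 2^s))"
  proof (intro sum.cong refl)
    fix R assume "R \<in> Pow M"
    have "(2::nat)^(s * card (M - R)) = (2^s)^card (M - R)" by (rule power_mult)
    then show "(2::nat)^(s * card (M - R)) = (\<Prod>x\<in>R. 1) * (\<Prod>x\<in>M-R. 2^s)" by simp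
  qed
  also have "\<dots> = (\<Prod>x\<in>M. 1 + 2^s)" using fM by (rule prod_add[symmetric])
  also have "\<dots> = (2^s+1)^(m-1)" using cM by simp
  finally show ?thesis .
qed

lemma N_upper: "card F \<le> m * (2^s+1)^(m-1)"
proof -
  have "F \<subseteq> (\<Union>i\<in>{1..m}. X i)"
  proof
    fix A assume A: "A \<in> F"
    then obtain i where "i \<in> {1..m}" "B i \<subseteq> A" using F_struct[OF A] by auto
    then show "A \<in> (\<Union>i\<in>{1..m}. X i)" using A unfolding X_def by auto
  qed
  then have "card F \<le> card (\<Union>i\<in>{1..m}. X i)"
    by (intro card_mono) (auto simp: X_def finF)
  also have "\<dots> \<le> (\<Sum>i\<in>{1..m}. card (X i))" by (intro card_UN_le) simp
  also have "\<dots> \<le> (\<Sum>i\<in>{1..m}. (2^s+1)^(m-1))" using X_upper by (intro sum_mono) auto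
  finally show ?thesis by simp
qed

lemma abund_set: "x \<in> {1..k*m} - T \<Longrightarrow> \<exists>i\<in>{1..m}. {A\<in>F. x \<in> A} = X i"
proof -
  assume x: "x \<in> {1..k*m} - T"
  then obtain i where i: "i \<in> {1..m}" "x \<in> B i" using cover by blast
  have "{A\<in>F. x \<in> A} = X i"
  proof
    show "X i \<subseteq> {A\<in>F. x \<in> A}" using i unfolding X_def by blast
  next
    show "{A\<in>F. x \<in> A} \<subseteq> X i"
    proof
      fix A assume A: "A \<in> {A\<in>F. x \<in> A}"
      then have "A \<in> F" "x \<in> A" by auto
      then have "x \<in> T \<or> (\<exists>j\<in>{1..m}. x \<in> B j \<and> B j \<subseteq> A)" using F_struct by auto
      then obtain j where j: "j \<in> {1..m}" "x \<in> B j" "B j \<subseteq> A" using x by auto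
      then have "j = i" using disj i by blast
      then show "A \<in> X i" using A j unfolding X_def by blast
    qed
  qed
  then show ?thesis using i by blast
qed


lemma pow_8m: "n \<ge> 7 \<Longrightarrow> 8 * n < (2::nat)^n"
proof (induction n rule: dec_induct)
  case base then show ?case by simp
next
  case (step n) then show ?case by simp
qed

lemma lg_ge4: "4 \<le> log 2 (real m)"
proof -
  have "(2::real) powr 4 = 16" by simp
  then have "(2::real) powr 4 \<le> real m" using m16 by simp
  then show ?thesis using m16 by (subst le_log_iff) auto
qed

lemma ceil_nonneg: "\<lceil>log 2 (real m)\<rceil> \<ge> 0"
  using lg_ge4 by linarith

lemma s_real: "real s = real_of_int \<lceil>log 2 (real m)\<rceil> + 2"
  using ceil_nonneg unfolding s_def by simp

lemma s_bounds: "log 2 (real m) + 2 \<le> real s" "real s \<le> log 2 (real m) + 3"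
  using s_real le_of_int_ceiling[of "log 2 (real m)"] of_int_ceiling_le_add_one[of "log 2 (real m)"]
  by linarith+

lemma pow2s: "4 * m \<le> 2^s" "2^s \<le> 8 * m"
proof -
  define c0 where "c0 = nat \<lceil>log 2 (real m)\<rceil>"
  have s_eq: "s = c0 + 2" unfolding s_def c0_def by simp
  have "real m \<le> (2::real) ^ c0" unfolding c0_def by (rule power_of_nat_log_ge) simp
  then have "m \<le> 2^c0" by (metis of_nat_le_iff of_nat_numeral of_nat_power)
  then show "4 * m \<le> 2^s" unfolding s_eq by (simp add: power_add)
  have "(2::real) ^ c0 = 2 powr (real c0)" by (simp add: powr_realpow)
  also have "real c0 = real_of_int \<lceil>log 2 (real m)\<rceil>" unfolding c0_def using ceil_nonneg by simp
  also have "(2::real) powr \<dots> \<le> 2 powr (log 2 (real m) + 1)"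
    using of_int_ceiling_le_add_one[of "log 2 (real m)"] by (intro powr_mono) auto
  also have "\<dots> = 2 * real m" using m16 by (simp add: powr_add)
  finally have "(2::real) ^ c0 \<le> 2 * real m" .
  then have "2^c0 \<le> 2 * m" by (metis of_nat_le_iff of_nat_mult of_nat_numeral of_nat_power)
  then show "2^s \<le> 8 * m" unfolding s_eq by (simp add: power_add)
qed

lemma s_le_m: "s \<le> m"
proof -
  have "(2::nat)^s < 2^m" using pow2s(2) pow_8m[of m] m16 by linarith
  then show ?thesis using power_less_imp_less_exp by fastforce
qed

lemma Q3P: "real ((2^s+1)^(m-1)) \<le> 3 * real ((2::nat)^(s*(m-1)))"
proof -
  define a where "a = real ((2::nat)^s)"
  have a4: "a \<ge> 4 * real m" unfolding a_def using pow2s(1) by (metis of_nat_le_iff of_nat_mult of_nat_numeral)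
  have apos: "a > 0" using a4 m16 by simp
  have "real ((2^s+1)^(m-1)) = (a + 1)^(m-1)" unfolding a_def by (simp add: add.commute)
  also have "a + 1 = a * (1 + 1/a)" using apos by (simp add: field_simps)
  then have "(a + 1)^(m-1) = (a * (1 + 1/a))^(m-1)" by simp
  also have "\<dots> = a^(m-1) * (1 + 1/a)^(m-1)" by (simp add: power_mult_distrib)
  also have "(1 + 1/a)^(m-1) \<le> exp (1/a) ^ (m-1)"
  proof (rule power_mono)
    show "1 + 1/a \<le> exp (1/a)" by (rule exp_ge_add_one_self)
    show "0 \<le> 1 + 1/a" using apos by simp
  qed
  also have "exp (1/a) ^ (m-1) = exp (real (m-1) * (1/a))" by (rule exp_of_nat_mult[symmetric])
  also have "\<dots> \<le> exp 1"
  proof -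
    have "real (m-1) \<le> a" using a4 by simp
    then have "real (m-1) * (1/a) \<le> 1" using apos by (simp add: field_simps)
    then show ?thesis by simp
  qed
  also have "exp 1 \<le> (3::real)" by (rule exp_le)
  finally have "real ((2^s+1)^(m-1)) \<le> a^(m-1) * 3"
    using apos by (simp add: mult_left_mono)
  moreover have "a^(m-1) = real ((2::nat)^(s*(m-1)))" unfolding a_def by (simp add: power_mult)
  ultimately show ?thesis by simp
qed


lemma m_pos: "real m > 0" using m16 by simp

lemma P_pos: "real ((2::nat)^(s*(m-1))) > 0" by simp

lemma N_pos: "real (card F) > 0"
proof -
  have "m * 2^(s*(m-1)) > 0" using m16 by simp
  then show ?thesis using N_lower by linarith
qed

lemma abund_main:
  assumes x: "x \<in> {1..k*m} - T"
  shows "1 / (3 * real m) \<le> abundance F x" "abundance F x \<le> 3 / real m"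
proof -
  obtain i where i: "i \<in> {1..m}" and eq: "{A\<in>F. x \<in> A} = X i" using abund_set[OF x] by blast
  define p where "p = real ((2::nat)^(s*(m-1)))"
  define q where "q = real ((2^s+1)^(m-1))"
  define xi where "xi = real (card (X i))"
  define N where "N = real (card F)"
  have h1: "p \<le> xi" unfolding p_def xi_def using X_lower[OF i] by linarith
  have h2: "xi \<le> q" unfolding q_def xi_def using X_upper[OF i] by linarith
  have "real (m * 2^(s*(m-1))) \<le> real (card F)" using N_lower by (simp only: of_nat_le_iff)
  then have h3: "real m * p \<le> N" unfolding p_def N_def by simp
  have "real (card F) \<le> real (m * (2^s+1)^(m-1))" using N_upper by (simp only: of_nat_le_iff)
  then have h4: "N \<le> real m * q" unfolding q_def N_def by simp
  have h5: "q \<le> 3 * p" unfolding q_def p_def by (rule Q3P)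
  have Np: "N > 0" unfolding N_def by (rule N_pos)
  have mp: "real m > 0" by (rule m_pos)
  have ab: "abundance F x = xi / N" unfolding abundance_def eq xi_def N_def ..
  have "N \<le> 3 * real m * xi"
  proof -
    have "N \<le> real m * (3 * p)" using h4 h5 mp by (meson mult_left_mono less_imp_le order_trans)
    also have "\<dots> \<le> real m * (3 * xi)" using h1 mp by simp
    finally show ?thesis by simp
  qed
  then show "1 / (3 * real m) \<le> abundance F x" unfolding ab using Np mp
    by (simp add: field_simps)
  have "real m * xi \<le> 3 * N"
  proof -
    have "real m * xi \<le> real m * (3 * p)" using h2 h5 mp by simp
    also have "\<dots> \<le> 3 * N" using h3 by simp
    finally show ?thesis .
  qed
  then show "abundance F x \<le> 3 / real m" unfolding ab using Np mp
    by (simp add: field_simps)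
qed

lemma abund_01: "0 \<le> abundance F x" "abundance F x \<le> 1"
proof -
  have "card {A\<in>F. x \<in> A} \<le> card F" using finF by (intro card_mono) auto
  then show "0 \<le> abundance F x" "abundance F x \<le> 1" unfolding abundance_def using N_pos
    by (auto simp: divide_le_eq)
qed

lemma T_small: "real (card T) * 2 \<le> real k" "real (card T) * real m \<le> real k"
proof -
  have "card T \<le> m*s" by (rule card_T)
  then have "card T * 2 \<le> m*s*2" by simp
  moreover have "m*s*2 = 2*m*s" by simp
  ultimately have "card T * 2 \<le> k" using k_ge(1) by linarith
  then have "real (card T * 2) \<le> real k" by (simp only: of_nat_le_iff)
  then show "real (card T) * 2 \<le> real k" by simp
  have "card T * m \<le> m*s*m" using card_T by simp
  also have "\<dots> = k" unfolding k_def by (simp add: power2_eq_square)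
  finally have "real (card T * m) \<le> real k" by (simp only: of_nat_le_iff)
  then show "real (card T) * real m \<le> real k" by simp
qed


lemma avg_bounds:
  "1 / (6 * real m) \<le> (1 / real (k*m)) * (\<Sum>x\<in>{1..k*m}. abundance F x)"
  "(1 / real (k*m)) * (\<Sum>x\<in>{1..k*m}. abundance F x) \<le> 4 / real m"
proof -
  define n where "n = k*m"
  define U where "U = {1..n} - T"
  have Tn: "T \<subseteq> {1..n}" unfolding n_def by (rule T_sub)
  have split: "(\<Sum>x\<in>{1..n}. abundance F x) = (\<Sum>x\<in>U. abundance F x) + (\<Sum>x\<in>T. abundance F x)"
    unfolding U_def using Tn by (intro sum.subset_diff) auto
  have cU: "real (card U) + real (card T) = real n"
  proof -
    have "card U = card {1..n} - card T" unfolding U_def using Tn finT by (simp add: card_Diff_subset)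
    moreover have "card T \<le> card {1..n}" using Tn by (intro card_mono) auto
    ultimately show ?thesis by simp
  qed
  have mp: "real m > 0" by (rule m_pos)
  have kn: "real n = real k * real m" unfolding n_def by simp
  have kp: "real k > 0" using k_ge by simp
  have np: "real n > 0" using kn kp mp by simp
  have TU: "real (card T) * 2 \<le> real n"
  proof -
    have "real (card T) * 2 \<le> real k" by (rule T_small(1))
    also have "\<dots> \<le> real n" using kn mp m16 kp by simp
    finally show ?thesis .
  qed
  have SU_lo: "real (card U) * (1 / (3 * real m)) \<le> (\<Sum>x\<in>U. abundance F x)"
    by (rule sum_bounded_below) (use abund_main U_def n_def in blast)
  have SU_hi: "(\<Sum>x\<in>U. abundance F x) \<le> real (card U) * (3 / real m)"
    by (rule sum_bounded_above) (use abund_main U_def n_def in blast)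
  have ST_lo: "0 \<le> (\<Sum>x\<in>T. abundance F x)" using abund_01 by (simp add: sum_nonneg)
  have ST_hi: "(\<Sum>x\<in>T. abundance F x) \<le> real (card T) * 1"
    by (rule sum_bounded_above) (use abund_01 in blast)
  have lo: "real n / (6 * real m) \<le> (\<Sum>x\<in>{1..n}. abundance F x)"
  proof -
    have "real n / (6 * real m) \<le> real (card U) * (1 / (3 * real m))"
      using cU TU mp by (simp add: field_simps)
    then show ?thesis using split SU_lo ST_lo by linarith
  qed
  have hi: "(\<Sum>x\<in>{1..n}. abundance F x) \<le> real n * (4 / real m)"
  proof -
    have "real (card U) * (3 / real m) \<le> real n * (3 / real m)" using cU mp by (simp add: field_simps)
    moreover have "real (card T) \<le> real n * (1 / real m)"
    proof -
      have "real (card T) * real m \<le> real k" by (rule T_small(2))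
      also have "\<dots> \<le> real k * real m" using mp m16 kp by simp
      finally show ?thesis using kn mp by (simp add: field_simps)
    qed
    ultimately have "real (card U) * (3 / real m) + real (card (T)) * 1 \<le> real n * (3 / real m) + real n * (1 / real m)"
      by simp
    also have "\<dots> = real n * (4 / real m)" by (simp add: field_simps)
    finally have ineq: "real (card U) * (3 / real m) + real (card (T)) * 1 \<le> real n * (4 / real m)" .
    note split
    also have "(\<Sum>x\<in>U. abundance F x) + (\<Sum>x\<in>T. abundance F x) \<le> real (card U) * (3 / real m) + real (card (T)) * 1"
      by (rule add_mono[OF SU_hi ST_hi])
    also note ineq
    finally show ?thesis .
  qed
  show "1 / (6 * real m) \<le> (1 / real (k*m)) * (\<Sum>x\<in>{1..k*m}. abundance F x)"
    using lo np mp unfolding n_def[symmetric] by (simp add: field_simps)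
  show "(1 / real (k*m)) * (\<Sum>x\<in>{1..k*m}. abundance F x) \<le> 4 / real m"
    using hi np mp unfolding n_def[symmetric] by (simp add: field_simps)
qed


lemma set_bounds:
  assumes A: "A \<in> F"
  shows "1 / (6 * real m) \<le> (1 / real (card A)) * (\<Sum>x\<in>A. abundance F x)"
    "(1 / real (card A)) * (\<Sum>x\<in>A. abundance F x) \<le> 4 / real m"
proof -
  have An: "A \<subseteq> {1..k*m}" using F_struct[OF A] by blast
  obtain i where i: "i \<in> {1..m}" "B i \<subseteq> A" using F_struct[OF A] by blast
  have fA: "finite A" using An finite_subset by blast
  have "card (B i) \<le> card A" using i fA by (intro card_mono) auto
  then have kA: "real k \<le> real (card A)" using cardB[OF i(1)] by simp
  define U where "U = A - (A \<inter> T)"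
  have split: "(\<Sum>x\<in>A. abundance F x) = (\<Sum>x\<in>U. abundance F x) + (\<Sum>x\<in>A \<inter> T. abundance F x)"
    unfolding U_def using fA by (intro sum.subset_diff) auto
  have cU: "real (card U) + real (card (A \<inter> T)) = real (card A)"
  proof -
    have "card U = card A - card (A \<inter> T)" unfolding U_def using fA by (simp add: card_Diff_subset)
    moreover have "card (A \<inter> T) \<le> card A" using fA by (intro card_mono) auto
    ultimately show ?thesis by simp
  qed
  have cAT: "real (card (A \<inter> T)) \<le> real (card T)" using finT by (simp add: card_mono)
  have mp: "real m > 0" by (rule m_pos)
  have kp: "real k > 0" using k_ge by simp
  have Ap: "real (card A) > 0" using kA kp by simp
  have TU: "real (card (A \<inter> T)) * 2 \<le> real (card A)" using T_small(1) cAT kA by linarith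
  have SU_lo: "real (card U) * (1 / (3 * real m)) \<le> (\<Sum>x\<in>U. abundance F x)"
    by (rule sum_bounded_below) (use abund_main U_def An in blast)
  have SU_hi: "(\<Sum>x\<in>U. abundance F x) \<le> real (card U) * (3 / real m)"
    by (rule sum_bounded_above) (use abund_main U_def An in blast)
  have ST_lo: "0 \<le> (\<Sum>x\<in>A \<inter> T. abundance F x)" using abund_01 by (simp add: sum_nonneg)
  have ST_hi: "(\<Sum>x\<in>A \<inter> T. abundance F x) \<le> real (card (A \<inter> T)) * 1"
    by (rule sum_bounded_above) (use abund_01 in blast)
  have lo: "real (card A) / (6 * real m) \<le> (\<Sum>x\<in>A. abundance F x)"
  proof -
    have "real (card A) / (6 * real m) \<le> real (card U) * (1 / (3 * real m))"
      using cU TU mp by (simp add: field_simps)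
    then show ?thesis using split SU_lo ST_lo by linarith
  qed
  have hi: "(\<Sum>x\<in>A. abundance F x) \<le> real (card A) * (4 / real m)"
  proof -
    have "real (card U) * (3 / real m) \<le> real (card A) * (3 / real m)" using cU mp by (simp add: field_simps)
    moreover have "real (card (A \<inter> T)) \<le> real (card A) * (1 / real m)"
    proof -
      have "real (card (A \<inter> T)) * real m \<le> real k" using T_small(2) cAT mp
        by (meson mult_right_mono less_imp_le order_trans)
      also have "\<dots> \<le> real (card A)" by (rule kA)
      finally show ?thesis using mp by (simp add: field_simps)
    qed
    ultimately have "real (card U) * (3 / real m) + real (card (A \<inter> T)) * 1 \<le> real (card A) * (3 / real m) + real (card A) * (1 / real m)"
      by simp
    also have "\<dots> = real (card A) * (4 / real m)" by (simp add: field_simps)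
    finally have ineq: "real (card U) * (3 / real m) + real (card (A \<inter> T)) * 1 \<le> real (card A) * (4 / real m)" .
    note split
    also have "(\<Sum>x\<in>U. abundance F x) + (\<Sum>x\<in>A \<inter> T. abundance F x) \<le> real (card U) * (3 / real m) + real (card (A \<inter> T)) * 1"
      by (rule add_mono[OF SU_hi ST_hi])
    also note ineq
    finally show ?thesis .
  qed
  show "1 / (6 * real m) \<le> (1 / real (card A)) * (\<Sum>x\<in>A. abundance F x)"
    using lo Ap mp by (simp add: field_simps)
  show "(1 / real (card A)) * (\<Sum>x\<in>A. abundance F x) \<le> 4 / real m"
    using hi Ap mp by (simp add: field_simps)
qed

lemma AOD_bounds: "1 / (6 * real m) \<le> AOD F" "AOD F \<le> 4 / real m"
proof -
  have FF: "F - {{}} = F" using F_ne by blast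
  define h where "h A = (1 / real (card A)) * (\<Sum>x\<in>A. abundance F x)" for A
  have AOD_eq: "AOD F = (1 / real (card F)) * (\<Sum>A\<in>F. h A)" unfolding AOD_def FF h_def ..
  have Np: "real (card F) > 0" by (rule N_pos)
  have "real (card F) * (1 / (6 * real m)) \<le> (\<Sum>A\<in>F. h A)"
    by (rule sum_bounded_below) (use set_bounds h_def in auto)
  then show "1 / (6 * real m) \<le> AOD F" unfolding AOD_eq using Np by (simp add: field_simps)
  have "(\<Sum>A\<in>F. h A) \<le> real (card F) * (4 / real m)"
    by (rule sum_bounded_above) (use set_bounds h_def in auto)
  then show "AOD F \<le> 4 / real m" unfolding AOD_eq using Np by (simp add: field_simps)
qed


lemma logN_bounds: "real s * (real m - 1) \<le> log 2 (real (card F))" "log 2 (real (card F)) \<le> real s * real m"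
proof -
  define p where "p = real ((2::nat)^(s*(m-1)))"
  define q where "q = real ((2^s+1)^(m-1))"
  define N where "N = real (card F)"
  have Np: "N > 0" unfolding N_def by (rule N_pos)
  have pp: "p > 0" unfolding p_def by simp
  have mp: "real m \<ge> 1" using m16 by simp
  have "real (m * 2^(s*(m-1))) \<le> real (card F)" using N_lower by (simp only: of_nat_le_iff)
  then have h3: "real m * p \<le> N" unfolding p_def N_def by simp
  have "real (card F) \<le> real (m * (2^s+1)^(m-1))" using N_upper by (simp only: of_nat_le_iff)
  then have h4: "N \<le> real m * q" unfolding q_def N_def by simp
  have h5: "q \<le> 3 * p" unfolding q_def p_def by (rule Q3P)
  have "1 * p \<le> real m * p" using mp pp by (intro mult_right_mono) auto
  then have "p \<le> N" using h3 by linarith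
  then have "log 2 p \<le> log 2 N" using pp by simp
  moreover have "log 2 p = real (s*(m-1))" unfolding p_def by simp
  moreover have "real (s*(m-1)) = real s * (real m - 1)"
  proof -
    have e: "real (m-1) = real m - 1" using m16 by (simp add: of_nat_diff)
    have "real (s*(m-1)) = real s * real (m-1)" by simp
    then show ?thesis using e by simp
  qed
  ultimately have "real s * (real m - 1) \<le> log 2 N" by linarith
  then show "real s * (real m - 1) \<le> log 2 (real (card F))" unfolding N_def .
  have "real (4 * m) \<le> real ((2::nat)^s)" using pow2s(1) by (simp only: of_nat_le_iff)
  then have s4: "4 * real m \<le> real ((2::nat)^s)" by simp
  have "real m * q \<le> real m * (3 * p)" using h5 mp by (intro mult_left_mono) auto
  then have "N \<le> real m * (3 * p)" using h4 by linarith
  also have "\<dots> = (3 * real m) * p" by simp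
  also have "\<dots> \<le> real ((2::nat)^s) * p" using s4 pp by (intro mult_right_mono) auto
  also have "\<dots> = real ((2::nat)^(s*m))"
  proof -
    have "s*m = s + s*(m-1)" using m16 by (cases m) auto
    then show ?thesis unfolding p_def by (simp add: power_add)
  qed
  finally have Nle: "N \<le> (2::real)^(s*m)" by simp
  have "log 2 N \<le> log 2 ((2::real)^(s*m))" using Np Nle by (intro log_mono) auto
  also have "\<dots> = real (s*m)" by simp
  finally show "log 2 (real (card F)) \<le> real s * real m" unfolding N_def by simp
qed

lemma L_bounds:
  "1 / (2 * real m) \<le> log 2 (log 2 (real (card F))) / log 2 (real (card F))"
  "log 2 (log 2 (real (card F))) / log 2 (real (card F)) \<le> 4 / real m"
proof -
  define lN where "lN = log 2 (real (card F))"
  define lg where "lg = log 2 (real m)"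
  have lg4: "lg \<ge> 4" unfolding lg_def by (rule lg_ge4)
  have mr: "real m \<ge> 16" using m16 by simp
  have sr: "lg + 2 \<le> real s" "real s \<le> lg + 3" unfolding lg_def using s_bounds by auto
  have b1: "real s * (real m - 1) \<le> lN" "lN \<le> real s * real m" unfolding lN_def using logN_bounds by auto
  have sm1: "real m \<le> real s * (real m - 1)"
  proof -
    have "real s * (real m - 1) \<ge> 2 * (real m - 1)" using sr lg4 mr by (intro mult_right_mono) auto
    moreover have "real m \<le> 2 * (real m - 1)" using mr by simp
    ultimately show ?thesis by (rule order_trans[rotated])
  qed
  have lNp: "lN > 0" using sm1 b1 mr by linarith
  have "log 2 (real m) \<le> log 2 lN" using sm1 b1 mr by (intro log_mono) auto
  then have lo1: "lg \<le> log 2 lN" unfolding lg_def .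
  have "real s * real m \<le> (lg + 3) * real m" using sr mr by (intro mult_right_mono) auto
  then have "lN \<le> (lg + 3) * real m" using b1 by linarith
  also have "\<dots> \<le> (2 * lg) * real m" using lg4 mr by (intro mult_right_mono) auto
  finally have lo2: "lN \<le> 2 * lg * real m" .
  have "2 * lg * real m \<le> 2 * log 2 lN * real m" using lo1 mr by (intro mult_right_mono) auto
  then have "lN \<le> 2 * log 2 lN * real m" using lo2 by linarith
  then show "1 / (2 * real m) \<le> log 2 lN / lN" using lNp mr by (simp add: field_simps)
  have "real s \<le> real m" using s_le_m by simp
  then have "real s * real m \<le> real m * real m" using mr by (intro mult_right_mono) auto
  then have "lN \<le> real m * real m" using b1 by linarith
  then have "log 2 lN \<le> log 2 (real m * real m)" using lNp by simp
  also have "\<dots> = 2 * lg" unfolding lg_def using mr by (simp add: log_mult)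
  finally have hi1: "log 2 lN \<le> 2 * lg" .
  have "lg * (real m / 2) \<le> real s * (real m - 1)"
  proof -
    have "lg * (real m / 2) \<le> real s * (real m / 2)" using sr mr by (intro mult_right_mono) auto
    also have "\<dots> \<le> real s * (real m - 1)" using mr by (intro mult_left_mono) auto
    finally show ?thesis .
  qed
  then have hi2: "lg * real m \<le> 2 * lN" using b1 by linarith
  have "real m * log 2 lN \<le> real m * (2 * lg)" using hi1 mr by (intro mult_left_mono) auto
  also have "\<dots> = 2 * (lg * real m)" by simp
  also have "\<dots> \<le> 4 * lN" using hi2 by linarith
  finally show "log 2 lN / lN \<le> 4 / real m" using lNp mr by (simp add: field_simps)
qed

end

theorem mainTheorem4:
  shows "\<exists>c C :: real. \<exists>m0 :: nat. c > 0 \<and> C > 0 \<and>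
    (\<forall>m :: nat. m \<ge> m0 \<longrightarrow>
      (\<forall>(B :: nat \<Rightarrow> nat set) (Tb :: nat \<Rightarrow> nat set).
        let s = nat \<lceil>log 2 (real m)\<rceil> + 2; k = m^2 * s; n = k * m in
        (\<forall>i\<in>{1..m}. card (B i) = k) \<longrightarrow>
        (\<forall>i\<in>{1..m}. \<forall>j\<in>{1..m}. i \<noteq> j \<longrightarrow> B i \<inter> B j = {}) \<longrightarrow>
        (\<Union>i\<in>{1..m}. B i) = {1..n} \<longrightarrow>
        (\<forall>i\<in>{1..m}. Tb i \<subseteq> B i \<and> card (Tb i) = s) \<longrightarrow>
        (let T = (\<Union>i\<in>{1..m}. Tb i);
             F = uc_gen {B i \<union> {t} | i t. i \<in> {1..m} \<and> t \<in> T};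
             L = log 2 (log 2 (real (card F))) / log 2 (real (card F));
             avg = (1 / real n) * (\<Sum>x\<in>{1..n}. abundance F x)
         in c * L \<le> AOD F \<and> AOD F \<le> C * L \<and> c * L \<le> avg \<and> avg \<le> C * L)))"
  apply (rule exI[where x="1/24"], rule exI[where x=8], rule exI[where x=16])
  apply (intro conjI allI impI)
    apply simp
   apply simp
  subgoal premises prems for m B Tb
  proof -
    define s where "s = nat \<lceil>log 2 (real m)\<rceil> + 2"
    define k where "k = m^2 * s"
    show ?thesis
      unfolding Let_def s_def[symmetric] k_def[symmetric]
    proof (intro impI)
      assume h1: "\<forall>i\<in>{1..m}. card (B i) = k"
        and h2: "\<forall>i\<in>{1..m}. \<forall>j\<in>{1..m}. i \<noteq> j \<longrightarrow> B i \<inter> B j = {}"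
        and h3: "(\<Union>i\<in>{1..m}. B i) = {1..k*m}"
        and h4: "\<forall>i\<in>{1..m}. Tb i \<subseteq> B i \<and> card (Tb i) = s"
      interpret cx m s k B Tb
        by unfold_locales (use prems h1 h2 h3 h4 s_def k_def in auto)
      have FF: "uc_gen {B i \<union> {t} |i t. i \<in> {1..m} \<and> t \<in> (\<Union>i\<in>{1..m}. Tb i)} = F"
        unfolding F_def G_def T_def ..
      define l where "l = log 2 (log 2 (real (card F))) / log 2 (real (card F))"
      define av where "av = (1 / real (k*m)) * (\<Sum>x\<in>{1..k*m}. abundance F x)"
      define t where "t = 1 / real m"
      have e1: "1 / (2 * real m) = t / 2" "4 / real m = 4 * t" "1 / (6 * real m) = t / 6"
        unfolding t_def by simp_all
      have l1: "t / 2 \<le> l" "l \<le> 4 * t" using L_bounds unfolding l_def e1 by auto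
      have a1: "t / 6 \<le> AOD F" "AOD F \<le> 4 * t" using AOD_bounds unfolding e1 by auto
      have v1: "t / 6 \<le> av" "av \<le> 4 * t" using avg_bounds unfolding av_def e1 by auto
      show "1 / 24 * (log 2 (log 2 (real (card (uc_gen {B i \<union> {t} |i t. i \<in> {1..m} \<and> t \<in> (\<Union>i\<in>{1..m}. Tb i)})))) /
          log 2 (real (card (uc_gen {B i \<union> {t} |i t. i \<in> {1..m} \<and> t \<in> (\<Union>i\<in>{1..m}. Tb i)}))))
      \<le> AOD (uc_gen {B i \<union> {t} |i t. i \<in> {1..m} \<and> t \<in> (\<Union>i\<in>{1..m}. Tb i)}) \<and>
      AOD (uc_gen {B i \<union> {t} |i t. i \<in> {1..m} \<and> t \<in> (\<Union>i\<in>{1..m}. Tb i)})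
      \<le> 8 * (log 2 (log 2 (real (card (uc_gen {B i \<union> {t} |i t. i \<in> {1..m} \<and> t \<in> (\<Union>i\<in>{1..m}. Tb i)})))) /
             log 2 (real (card (uc_gen {B i \<union> {t} |i t. i \<in> {1..m} \<and> t \<in> (\<Union>i\<in>{1..m}. Tb i)})))) \<and>
      1 / 24 * (log 2 (log 2 (real (card (uc_gen {B i \<union> {t} |i t. i \<in> {1..m} \<and> t \<in> (\<Union>i\<in>{1..m}. Tb i)})))) /
                log 2 (real (card (uc_gen {B i \<union> {t} |i t. i \<in> {1..m} \<and> t \<in> (\<Union>i\<in>{1..m}. Tb i)}))))
      \<le> 1 / real (k * m) * (\<Sum>x = 1..k * m. abundance (uc_gen {B i \<union> {t} |i t. i \<in> {1..m} \<and> t \<in> (\<Union>i\<in>{1..m}. Tb i)}) x) \<and>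
      1 / real (k * m) * (\<Sum>x = 1..k * m. abundance (uc_gen {B i \<union> {t} |i t. i \<in> {1..m} \<and> t \<in> (\<Union>i\<in>{1..m}. Tb i)}) x)
      \<le> 8 * (log 2 (log 2 (real (card (uc_gen {B i \<union> {t} |i t. i \<in> {1..m} \<and> t \<in> (\<Union>i\<in>{1..m}. Tb i)})))) /
             log 2 (real (card (uc_gen {B i \<union> {t} |i t. i \<in> {1..m} \<and> t \<in> (\<Union>i\<in>{1..m}. Tb i)}))))"
        unfolding FF l_def[symmetric] av_def[symmetric] using l1 a1 v1 by linarith
    qed
  qed
  done

end
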